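(* Every regular tetrahedron $T$ in $\mathbb{R}^3$ can be inside-out dissected with $34$ pieces.
   Context: An inside-out dissection of a polyhedron $P$ is a decomposition of $P$ into finitely many polyhedra $P_1,\ldots,P_k$ (called pieces; they have pairwise disjoint interiors and their union is $P$) such that (1) the pieces can be rearranged, applying to each piece only a rotation and a translation, to form a polyhedron $P'$ congruent to $P$, and (2) the boundary of $P'$ is composed of internal cuts of $P$, i.e. of (images of) portions of the pieces' boundaries that lay in the interior of $P$ rather than on the boundary of $P$. If such a decomposition exists, $P$ is said to be inside-out dissected with $k$ pieces. *)

theory Defs
  imports "HOL-Analysis.Analysis"
begin

definition polyhedron :: "(real^3) set \<Rightarrow> bool" where
  "polyhedron P \<longleftrightarrow>
     (\<exists>F. finite F \<and> (\<forall>S\<in>F. finite S) \<and> P = (\<Union>S\<in>F. convex hull S))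
     \<and> connected P \<and> interior P \<noteq> {} \<and> closure (interior P) = P"

definition rigid_motion :: "(real^3 \<Rightarrow> real^3) \<Rightarrow> bool" where
  "rigid_motion g \<longleftrightarrow>
     (\<exists>A b. orthogonal_matrix A \<and> det A = 1 \<and> (\<forall>x. g x = A *v x + b))"

definition congruent :: "(real^3) set \<Rightarrow> (real^3) set \<Rightarrow> bool" where
  "congruent P Q \<longleftrightarrow>
     (\<exists>f. (\<forall>x y. dist (f x) (f y) = dist x y) \<and> f ` P = Q)"

definition inside_out_dissection ::
  "(real^3) set \<Rightarrow> nat \<Rightarrow> (nat \<Rightarrow> (real^3) set) \<Rightarrow> (nat \<Rightarrow> (real^3 \<Rightarrow> real^3)) \<Rightarrow> bool" where
  "inside_out_dissection P k Ps gs \<longleftrightarrow>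
     (\<forall>i<k. polyhedron (Ps i)) \<and>
     (\<forall>i<k. \<forall>j<k. i \<noteq> j \<longrightarrow> interior (Ps i) \<inter> interior (Ps j) = {}) \<and>
     (\<Union>i<k. Ps i) = P \<and>
     (\<forall>i<k. rigid_motion (gs i)) \<and>
     (\<forall>i<k. \<forall>j<k. i \<noteq> j \<longrightarrow> interior (gs i ` Ps i) \<inter> interior (gs j ` Ps j) = {}) \<and>
     congruent P (\<Union>i<k. gs i ` Ps i) \<and>
     frontier (\<Union>i<k. gs i ` Ps i)
       \<subseteq> (\<Union>i<k. gs i ` closure (frontier (Ps i) \<inter> interior P))"

definition inside_out_dissectable :: "(real^3) set \<Rightarrow> nat \<Rightarrow> bool" where
  "inside_out_dissectable P k \<longleftrightarrow> (\<exists>Ps gs. inside_out_dissection P k Ps gs)"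

definition regular_tetrahedron :: "(real^3) set \<Rightarrow> bool" where
  "regular_tetrahedron T \<longleftrightarrow>
     (\<exists>a b c d s. s > 0 \<and> dist a b = s \<and> dist a c = s \<and> dist a d = s \<and>
        dist b c = s \<and> dist b d = s \<and> dist c d = s \<and> T = convex hull {a, b, c, d})"

end

theory Submission imports Defs begin

definition bc :: "nat \<Rightarrow> real^3 \<Rightarrow> real" where
 "bc m x = (if m = 0 then 4 - (x$1 + x$2 + x$3)/2 else if m = 1 then (x$1+x$2-x$3)/2
            else if m = 2 then (x$1-x$2+x$3)/2 else (x$2+x$3-x$1)/2)"

definition av :: "nat \<Rightarrow> real^3" where
 "av m = (if m = 0 then vector [-1/2,-1/2,-1/2] else if m = 1 then vector [1/2,1/2,-1/2]
            else if m = 2 then vector [1/2,-1/2,1/2] else vector [-1/2,1/2,1/2])"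

definition bv :: "nat \<Rightarrow> real" where "bv m = (if m = 0 then 4 else 0)"

lemma bc_inner: "bc m x = av m \<bullet> x + bv m"
  by (simp add: bc_def av_def bv_def inner_vec_def sum_3 vector_3) (simp add: field_simps)

lemma av_nz: "av m \<noteq> 0"
  by (auto simp: av_def vec_eq_iff forall_3 vector_3)

lemma four_cases: "(\<forall>m<4. P (m::nat)) \<longleftrightarrow> P 0 \<and> P 1 \<and> P 2 \<and> P 3"
  by (auto simp: less_Suc_eq numeral_eq_Suc)

definition pt :: "real \<Rightarrow> real \<Rightarrow> real \<Rightarrow> real^3" where
  "pt a b c = vector [a+b, a+c, b+c]"

lemma bc_pt: "bc 0 (pt a b c) = 4 - a - b - c" "bc 1 (pt a b c) = a" "bc 2 (pt a b c) = b" "bc 3 (pt a b c) = c"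
  by (simp_all add: bc_def pt_def vector_3) (simp_all add: field_simps)

lemma bc_pt1: "bc (Suc 0) (pt a b c) = a"
  using bc_pt(2) by simp

lemma bc_sum: "bc 0 x + bc 1 x + bc 2 x + bc 3 x = 4"
  by (simp add: bc_def) (simp add: field_simps)

lemma bc_seg: "bc m (x + s *\<^sub>R (y - x)) = (1 - s) * bc m x + s * bc m y"
  by (simp add: bc_inner inner_add_right inner_diff_right algebra_simps)

definition cell :: "int list \<Rightarrow> (real^3) set" where
 "cell f = {x. \<forall>m<4. of_int (f!m) \<le> bc m x \<and> bc m x \<le> of_int (f!m) + 1}"

definition T0 :: "(real^3) set" where "T0 = {x. \<forall>m<4. 0 \<le> bc m x}"

definition hl :: "nat \<Rightarrow> real \<Rightarrow> (real^3) set" where "hl m c = {x. bc m x \<le> c}"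
definition hg :: "nat \<Rightarrow> real \<Rightarrow> (real^3) set" where "hg m c = {x. c \<le> bc m x}"

lemma hl_eq: "hl m c = {x. av m \<bullet> x \<le> c - bv m}" by (auto simp: hl_def bc_inner)
lemma hg_eq: "hg m c = {x. av m \<bullet> x \<ge> c - bv m}" by (auto simp: hg_def bc_inner)

lemma int_hl: "interior (hl m c) = {x. bc m x < c}"
  unfolding hl_eq using av_nz by (auto simp: bc_inner)
lemma int_hg: "interior (hg m c) = {x. c < bc m x}"
  unfolding hg_eq using av_nz by (auto simp: bc_inner)
lemma ph_hl: "Polytope.polyhedron (hl m c)" unfolding hl_eq by (rule polyhedron_halfspace_le)
lemma ph_hg: "Polytope.polyhedron (hg m c)" unfolding hg_eq by (rule polyhedron_halfspace_ge)

lemma cell_Int: "cell f = hg 0 (f!0) \<inter> hl 0 (f!0+1) \<inter> hg 1 (f!1) \<inter> hl 1 (f!1+1)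
   \<inter> hg 2 (f!2) \<inter> hl 2 (f!2+1) \<inter> hg 3 (f!3) \<inter> hl 3 (f!3+1)"
  unfolding cell_def hl_def hg_def four_cases by auto

lemma T0_Int: "T0 = hg 0 0 \<inter> hg 1 0 \<inter> hg 2 0 \<inter> hg 3 0"
  unfolding T0_def hg_def four_cases by auto

lemma interior_cell: "interior (cell f) = {x. \<forall>m<4. of_int (f!m) < bc m x \<and> bc m x < of_int (f!m) + 1}"
  unfolding cell_Int interior_Int int_hl int_hg four_cases by auto

lemma interior_T0: "interior T0 = {x. \<forall>m<4. 0 < bc m x}"
  unfolding T0_Int interior_Int int_hg four_cases by auto

lemma ph_cell: "Polytope.polyhedron (cell f)"
  unfolding cell_Int by (intro polyhedron_Int ph_hl ph_hg)
lemma ph_T0: "Polytope.polyhedron T0"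
  unfolding T0_Int by (intro polyhedron_Int ph_hl ph_hg)

lemma closed_cell: "closed (cell f)" using ph_cell polyhedron_imp_closed by blast
lemma closed_T0: "closed T0" using ph_T0 polyhedron_imp_closed by blast
lemma convex_cell: "convex (cell f)" using ph_cell polyhedron_imp_convex by blast
lemma convex_T0: "convex T0" using ph_T0 polyhedron_imp_convex by blast

lemma bounded_T0: "bounded T0"
proof -
  have "norm x \<le> 24" if "x \<in> T0" for x
  proof -
    have b: "0 \<le> bc m x" if "m<4" for m using \<open>x \<in> T0\<close> that by (auto simp: T0_def)
    have s: "bc 0 x + bc 1 x + bc 2 x + bc 3 x = 4" by (rule bc_sum)
    have "x$1 = bc 1 x + bc 2 x" "x$2 = bc 1 x + bc 3 x" "x$3 = bc 2 x + bc 3 x"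
      by (simp_all add: bc_def) (simp_all add: field_simps)
    moreover have "0 \<le> bc 0 x" "0 \<le> bc 1 x" "0 \<le> bc 2 x" "0 \<le> bc 3 x" using b by auto
    ultimately have "\<bar>x$1\<bar> \<le> 8" "\<bar>x$2\<bar> \<le> 8" "\<bar>x$3\<bar> \<le> 8" using s by auto
    moreover have "norm x \<le> (\<Sum>i\<in>UNIV. \<bar>x$i\<bar>)" by (rule norm_le_l1_cart)
    ultimately show ?thesis by (simp add: sum_3)
  qed
  then show ?thesis unfolding bounded_iff by blast
qed


definition ssum :: "int list \<Rightarrow> int" where "ssum f = f!0+f!1+f!2+f!3"
definition valid :: "int list \<Rightarrow> bool" where
  "valid f \<longleftrightarrow> length f = 4 \<and> (\<forall>m<4. 0 \<le> f!m) \<and> 1 \<le> ssum f \<and> ssum f \<le> 3"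

definition srcs :: "int list list" where
 "srcs = [[a,b,c,d]. a \<leftarrow> [0..3], b \<leftarrow> [0..3], c \<leftarrow> [0..3], d \<leftarrow> [0..3], 1 \<le> a+b+c+d \<and> a+b+c+d \<le> 3]"

datatype mv = Pos "int list" | Neg "int list"

definition mvs :: "mv list" where "mvs = [Neg [1,1,1,5], Neg [1,1,1,5], Neg [1,1,1,5], Neg [1,1,5,1], Neg [1,1,3,3], Pos [2,1,-1,-2], Neg [1,1,5,1], Pos [1,2,-2,-1], Neg [1,1,5,1], Neg [2,4,1,1], Neg [2,2,1,3], Pos [1,-1,2,-2], Neg [2,2,3,1], Pos [1,-1,-1,1], Pos [2,-1,-2,1], Neg [3,3,1,1], Pos [2,-2,1,-1], Pos [1,-1,-1,1], Neg [4,2,1,1], Neg [4,2,1,1], Neg [2,2,1,3], Pos [0,1,1,-2], Neg [2,2,3,1], Pos [-1,1,1,-1], Pos [-1,1,-2,2], Neg [3,3,1,1], Pos [-1,0,1,0], Pos [-1,-1,1,1], Pos [0,-2,1,1], Neg [3,3,1,1], Pos [-2,2,1,-1], Pos [-2,2,-1,1], Pos [-2,-1,1,2], Neg [2,4,1,1]]"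

fun tg :: "int list \<Rightarrow> mv \<Rightarrow> int list" where
  "tg f (Pos t) = [f!0+t!0, f!1+t!1, f!2+t!2, f!3+t!3]"
| "tg f (Neg t) = [t!0 - f!1 - 1, t!1 - f!0 - 1, t!2 - f!2 - 1, t!3 - f!3 - 1]"

fun chk :: "int list \<Rightarrow> mv \<Rightarrow> bool" where
  "chk f (Pos t) = (length t = 4 \<and> ssum t = 0 \<and> list_all (\<lambda>m. tg f (Pos t) ! m = 0 \<longrightarrow> 1 \<le> f!m) [0..<4])"
| "chk f (Neg t) = (length t = 4 \<and> ssum t = 8)"

definition tgts :: "int list list" where "tgts = map (\<lambda>i. tg (srcs!i) (mvs!i)) [0..<34]"

lemma len_srcs: "length srcs = 34" by code_simp
lemma len_mvs: "length mvs = 34" by code_simp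
lemma chk_all: "list_all (\<lambda>i. chk (srcs!i) (mvs!i)) [0..<34]" by code_simp
lemma set_tgts: "set tgts = set srcs" by code_simp
lemma dist_srcs: "distinct srcs" by code_simp
lemma dist_tgts: "distinct tgts" by code_simp
lemma valid_srcs: "list_all valid srcs" by code_simp

lemma valid_in_srcs: assumes "valid f" shows "f \<in> set srcs"
proof -
  from assms have l: "length f = 4" and nn: "\<forall>m<4. 0 \<le> f!m" and s: "1 \<le> ssum f" "ssum f \<le> 3"
    by (auto simp: valid_def)
  have f: "f = [f!0, f!1, f!2, f!3]" using l
    by (simp add: list_eq_iff_nth_eq less_Suc_eq numeral_eq_Suc) 
  have nn': "0 \<le> f!0" "0 \<le> f!1" "0 \<le> f!2" "0 \<le> f!3" using nn by auto
  then have "f!0 \<in> set [0..3]" "f!1 \<in> set [0..3]" "f!2 \<in> set [0..3]" "f!3 \<in> set [0..3]"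
    using s by (auto simp: ssum_def)
  then show ?thesis using s unfolding srcs_def ssum_def
    by (subst f) (auto simp: set_concat)
qed


definition sh :: "int list \<Rightarrow> real^3" where "sh t = pt (of_int (t!1)) (of_int (t!2)) (of_int (t!3))"
definition Jm :: "real^3^3" where "Jm = vector [vector [0,1,0], vector [1,0,0], vector [0,0,-1]]"
definition wv :: "int list \<Rightarrow> real^3" where "wv t = vector [of_int (t!1+t!2) - 4, of_int (t!1+t!3) - 4, of_int (t!2+t!3)]"

fun mot :: "mv \<Rightarrow> real^3 \<Rightarrow> real^3" where
  "mot (Pos t) x = x + sh t"
| "mot (Neg t) x = Jm *v x + wv t"
fun minv :: "mv \<Rightarrow> real^3 \<Rightarrow> real^3" where
  "minv (Pos t) y = y - sh t"
| "minv (Neg t) y = Jm *v (y - wv t)"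

lemma Jm_vec: "Jm *v x = vector [x$2, x$1, - x$3]"
  by (simp add: Jm_def vec_eq_iff forall_3 matrix_vector_mult_def sum_3 vector_3)

lemma Jm_Jm: "Jm *v (Jm *v x) = x"
  by (simp add: Jm_vec vec_eq_iff forall_3 vector_3)

lemma mot_minv: "mot mv (minv mv y) = y"
  by (cases mv) (simp_all add: Jm_Jm matrix_vector_mult_diff_distrib)
lemma minv_mot: "minv mv (mot mv y) = y"
  by (cases mv) (simp_all add: Jm_Jm)

definition tau :: "nat \<Rightarrow> nat" where "tau m = (if m=0 then 1 else if m=1 then 0 else m)"

lemma bc_pos: assumes "ssum t = 0" "m < 4" shows "bc m (x + sh t) = bc m x + of_int (t!m)"
proof -
  have e: "real_of_int (t!0) = - (of_int (t!1) + of_int (t!2) + of_int (t!3))"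
  proof -
    have "real_of_int (ssum t) = 0" using assms(1) by simp
    then show ?thesis unfolding ssum_def by simp
  qed
  have "m = 0 \<or> m = 1 \<or> m = 2 \<or> m = 3" using assms(2) by auto
  then show ?thesis using e
    by (elim disjE) (simp_all add: bc_def sh_def pt_def vector_3 field_simps)
qed

lemma bc_neg: assumes "ssum t = 8" "m < 4" shows "bc m (Jm *v x + wv t) = of_int (t!m) - bc (tau m) x"
proof -
  have e: "real_of_int (t!0) = 8 - (of_int (t!1) + of_int (t!2) + of_int (t!3))"
  proof -
    have "real_of_int (ssum t) = 8" using assms(1) by simp
    then show ?thesis unfolding ssum_def by simp
  qed
  have "m = 0 \<or> m = 1 \<or> m = 2 \<or> m = 3" using assms(2) by auto
  then show ?thesis using e
    by (elim disjE) (simp_all add: bc_def Jm_vec wv_def tau_def vector_3 field_simps)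
qed

lemma mem_cell_mot: assumes "chk f mv" shows "mot mv x \<in> cell (tg f mv) \<longleftrightarrow> x \<in> cell f"
proof (cases mv)
  case (Pos t)
  then have s: "ssum t = 0" using assms by simp
  show ?thesis unfolding Pos cell_def mot.simps
    by (auto simp add: bc_pos[OF s] four_cases)
next
  case (Neg t)
  then have s: "ssum t = 8" using assms by simp
  show ?thesis unfolding Neg cell_def mot.simps
    by (auto simp add: bc_neg[OF s] four_cases tau_def)
qed

lemma image_cell: assumes "chk f mv" shows "mot mv ` cell f = cell (tg f mv)"
proof
  show "mot mv ` cell f \<subseteq> cell (tg f mv)" using mem_cell_mot[OF assms] by auto
  show "cell (tg f mv) \<subseteq> mot mv ` cell f"
  proof
    fix y assume "y \<in> cell (tg f mv)"
    then have "minv mv y \<in> cell f" using mem_cell_mot[OF assms, of "minv mv y"] by (simp add: mot_minv)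
    then show "y \<in> mot mv ` cell f" using mot_minv[of mv y] by (metis image_eqI)
  qed
qed

lemma orth_Jm: "orthogonal_matrix Jm"
  by (simp add: orthogonal_matrix_def Jm_def vec_eq_iff forall_3 matrix_matrix_mult_def sum_3 vector_3 transpose_def mat_def)

lemma det_Jm: "det Jm = 1"
  by (simp add: det_3 Jm_def vector_3)

lemma rigid_mot: "rigid_motion (mot mv)"
  unfolding rigid_motion_def
proof (cases mv)
  case (Pos t)
  show "\<exists>A b. orthogonal_matrix A \<and> det A = 1 \<and> (\<forall>x. mot mv x = A *v x + b)"
    by (rule exI[of _ "mat 1"], rule exI[of _ "sh t"]) (simp add: Pos orthogonal_matrix_id)
next
  case (Neg t)
  show "\<exists>A b. orthogonal_matrix A \<and> det A = 1 \<and> (\<forall>x. mot mv x = A *v x + b)"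
    by (rule exI[of _ Jm], rule exI[of _ "wv t"]) (simp add: Neg orth_Jm det_Jm)
qed


lemma cell_sub_T0: assumes "\<forall>m<4. 0 \<le> f!m" shows "cell f \<subseteq> T0"
  using assms unfolding cell_def T0_def by (force)

lemma valid_nn: "valid f \<Longrightarrow> \<forall>m<4. 0 \<le> f!m" by (simp add: valid_def)

lemma poly_cell: assumes "valid f" shows "polyhedron (cell f)"
proof -
  have nn: "\<forall>m<4. 0 \<le> f!m" and s: "1 \<le> ssum f" "ssum f \<le> 3" using assms by (auto simp: valid_def)
  have b: "bounded (cell f)" using bounded_subset[OF bounded_T0 cell_sub_T0[OF nn]] .
  have "polytope (cell f)" using ph_cell b polytope_eq_bounded_polyhedron by blast
  then obtain v where v: "finite v" "cell f = convex hull v" unfolding polytope_def by blast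
  define r :: real where "r = (4 - of_int (ssum f))/4"
  have r: "0 < r" "r < 1" using s unfolding r_def by auto
  define q where "q = pt (of_int (f!1) + r) (of_int (f!2) + r) (of_int (f!3) + r)"
  have "real_of_int (ssum f) = of_int (f!0) + of_int (f!1) + of_int (f!2) + of_int (f!3)"
    by (simp add: ssum_def)
  then have "bc 0 q = of_int (f!0) + r" "bc 1 q = of_int (f!1) + r" "bc 2 q = of_int (f!2) + r" "bc 3 q = of_int (f!3) + r"
    unfolding q_def bc_pt r_def by (simp_all add: field_simps)
  then have "q \<in> interior (cell f)" unfolding interior_cell four_cases
    using r by simp
  then have ne: "interior (cell f) \<noteq> {}" by blast
  show ?thesis unfolding polyhedron_def
  proof (intro conjI)
    show "\<exists>F. finite F \<and> (\<forall>S\<in>F. finite S) \<and> cell f = (\<Union>S\<in>F. convex hull S)"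
      by (rule exI[of _ "{v}"]) (simp add: v)
    show "connected (cell f)" by (rule convex_connected[OF convex_cell])
    show "interior (cell f) \<noteq> {}" by (rule ne)
    show "closure (interior (cell f)) = cell f"
      using convex_closure_interior[OF convex_cell ne] closed_cell by simp
  qed
qed

lemma len_eq4: "length f = 4 \<Longrightarrow> f = [f!0, f!1, f!2, f!3]"
  by (simp add: list_eq_iff_nth_eq less_Suc_eq numeral_eq_Suc)

lemma disj_cells: assumes "length f = 4" "length g = 4" "f \<noteq> g"
  shows "interior (cell f) \<inter> interior (cell g) = {}"
proof (rule ccontr)
  assume "interior (cell f) \<inter> interior (cell g) \<noteq> {}"
  then obtain x where x: "x \<in> interior (cell f)" "x \<in> interior (cell g)" by blast
  have "f!m = g!m" if "m < 4" for m
  proof -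
    have "of_int (f!m) < bc m x" "bc m x < of_int (f!m) + 1" "of_int (g!m) < bc m x" "bc m x < of_int (g!m) + 1"
      using x that unfolding interior_cell by auto
    then have "of_int (f!m) < (of_int (g!m) + 1 :: real)" "of_int (g!m) < (of_int (f!m) + 1 :: real)" by auto
    then have "f!m < g!m + 1" "g!m < f!m + 1" by linarith+
    then show ?thesis by simp
  qed
  then have "f = g" using assms by (intro nth_equalityI) auto
  then show False using assms by simp
qed

lemma find_cell: assumes "x \<in> T0"
  shows "\<exists>f. valid f \<and> x \<in> cell f \<and> ((\<exists>m<4. bc m x = 0) \<longrightarrow> 2 \<le> ssum f)"
proof -
  have nn: "0 \<le> bc m x" if "m < 4" for m using assms that by (auto simp: T0_def)
  have S: "bc 0 x + bc 1 x + bc 2 x + bc 3 x = 4" by (rule bc_sum)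
  define fl where "fl m = \<lfloor>bc m x\<rfloor>" for m
  have fl1: "of_int (fl m) \<le> bc m x" "bc m x < of_int (fl m) + 1" for m
    unfolding fl_def by linarith+
  have fl0: "0 \<le> fl m" if "m < 4" for m using nn[OF that] unfolding fl_def by simp
  have sum_gt: "(4::real) < of_int (fl 0 + fl 1 + fl 2 + fl 3) + 4" using fl1[of 0] fl1[of 1] fl1[of 2] fl1[of 3] S by simp
  have sum_le: "of_int (fl 0 + fl 1 + fl 2 + fl 3) \<le> (4::real)" using fl1[of 0] fl1[of 1] fl1[of 2] fl1[of 3] S by simp
  have bnd: "(\<exists>m<4. bc m x = 0) \<longrightarrow> 2 \<le> fl 0 + fl 1 + fl 2 + fl 3"
  proof
    assume "\<exists>m<4. bc m x = 0"
    then obtain m where m: "m < 4" "bc m x = 0" by blast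
    have fm: "fl m = 0" using m by (simp add: fl_def)
    have f0: "of_int (fl 0) \<le> bc 0 x" "bc 0 x < of_int (fl 0) + 1" using fl1[of 0] by auto
    have f1: "of_int (fl 1) \<le> bc 1 x" "bc 1 x < of_int (fl 1) + 1" using fl1[of 1] by auto
    have f2: "of_int (fl 2) \<le> bc 2 x" "bc 2 x < of_int (fl 2) + 1" using fl1[of 2] by auto
    have f3: "of_int (fl 3) \<le> bc 3 x" "bc 3 x < of_int (fl 3) + 1" using fl1[of 3] by auto
    have "m = 0 \<or> m = 1 \<or> m = 2 \<or> m = 3" using m by auto
    then have "(1::real) < of_int (fl 0) + of_int (fl 1) + of_int (fl 2) + of_int (fl 3)"
    proof (elim disjE)
      assume "m = 0" then have "bc 0 x = 0" "fl 0 = 0" using m fm by auto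
      then show ?thesis using f0 f1 f2 f3 S by linarith
    next
      assume "m = 1" then have "bc 1 x = 0" "fl 1 = 0" using m fm by auto
      then show ?thesis using f0 f1 f2 f3 S by linarith
    next
      assume "m = 2" then have "bc 2 x = 0" "fl 2 = 0" using m fm by auto
      then show ?thesis using f0 f1 f2 f3 S by linarith
    next
      assume "m = 3" then have "bc 3 x = 0" "fl 3 = 0" using m fm by auto
      then show ?thesis using f0 f1 f2 f3 S by linarith
    qed
    then show "2 \<le> fl 0 + fl 1 + fl 2 + fl 3" by linarith
  qed
  show ?thesis
  proof (cases "fl 0 + fl 1 + fl 2 + fl 3 \<le> 3")
    case True
    define f where "f = [fl 0, fl 1, fl 2, fl 3]"
    have "valid f" using True sum_gt fl0 unfolding valid_def f_def ssum_def four_cases by simp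
    moreover have "x \<in> cell f" unfolding cell_def f_def four_cases using fl1 by (simp add: less_imp_le)
    moreover have "ssum f = fl 0 + fl 1 + fl 2 + fl 3" by (simp add: f_def ssum_def)
    ultimately show ?thesis using bnd by (intro exI[of _ f]) simp
  next
    case False
    then have e4: "fl 0 + fl 1 + fl 2 + fl 3 = 4" using sum_le by linarith
    have int: "bc m x = of_int (fl m)" if "m < 4" for m
    proof -
      have "m = 0 \<or> m = 1 \<or> m = 2 \<or> m = 3" using that by auto
      moreover have "real_of_int (fl 0 + fl 1 + fl 2 + fl 3) = 4" using e4 by simp
      ultimately show ?thesis using fl1[of 0] fl1[of 1] fl1[of 2] fl1[of 3] S by auto
    qed
    obtain j where j: "j < 4" "1 \<le> fl j"
    proof -
      have "\<not> (\<forall>m<4. fl m \<le> 0)" using e4 unfolding four_cases by linarith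
      then show ?thesis using that by (auto simp: not_le)
    qed
    define f where "f = map (\<lambda>m. fl m - (if m = j then 1 else 0)) [0,1,2,3]"
    have fm: "f!m = fl m - (if m = j then 1 else 0)" if "m < 4" for m
      using that unfolding f_def four_cases by (auto simp: less_Suc_eq numeral_eq_Suc)
    have jj: "j = 0 \<or> j = 1 \<or> j = 2 \<or> j = 3" using j by auto
    have sf: "ssum f = 3" unfolding ssum_def using fm[of 0] fm[of 1] fm[of 2] fm[of 3] e4 jj by auto
    have "valid f" unfolding valid_def sf using fm fl0 j by (auto simp: f_def)
    moreover have "x \<in> cell f" unfolding cell_def using fm int j by auto
    ultimately show ?thesis using sf by auto
  qed
qed

lemma face_closure:
  assumes nn: "\<forall>k<4. 0 \<le> f!k" and j: "j < 4" and l: "l \<in> cell f" and lc: "bc j l = c"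
    and cd: "c = of_int (f!j) + d" and d: "d = 0 \<or> d = 1" and c0: "0 < c"
    and r: "r = (4 - of_int (ssum f) - d)/3" "0 < r" "r \<le> 1"
  shows "l \<in> closure (frontier (cell f) \<inter> interior T0)"
proof -
  define nu where "nu k = (if k = j then c else of_int (f!k) + r)" for k
  define q where "q = pt (nu 1) (nu 2) (nu 3)"
  have sf: "real_of_int (ssum f) = of_int (f!0) + of_int (f!1) + of_int (f!2) + of_int (f!3)"
    by (simp add: ssum_def)
  have jj: "j = 0 \<or> j = 1 \<or> j = 2 \<or> j = 3" using j by auto
  have r3: "3 * r = 4 - of_int (ssum f) - d" using r(1) by simp
  have sumnu: "nu 0 + nu 1 + nu 2 + nu 3 = 4"
    using jj r3 cd sf unfolding nu_def by auto
  have bq: "bc k q = nu k" if "k < 4" for k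
  proof -
    have "k = 0 \<or> k = 1 \<or> k = 2 \<or> k = 3" using that by auto
    then show ?thesis unfolding q_def using sumnu
      by (elim disjE) (simp_all add: bc_pt bc_pt1)
  qed
  have qpos: "0 < bc k q" if "k < 4" for k
    using bq[OF that] nn that c0 r unfolding nu_def by (auto simp: add_nonneg_pos)
  have qcell: "of_int (f!k) \<le> bc k q \<and> bc k q \<le> of_int (f!k) + 1" if "k < 4" for k
    using bq[OF that] r d cd unfolding nu_def by auto
  have lcell: "of_int (f!k) \<le> bc k l \<and> bc k l \<le> of_int (f!k) + 1" if "k < 4" for k
    using l that unfolding cell_def by auto
  show ?thesis unfolding closure_approachable
  proof (intro allI impI)
    fix e :: real assume e: "0 < e"
    define s where "s = min (1/2) (e / (2 * (norm (q - l) + 1)))"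
    have "0 < e / (2 * (norm (q - l) + 1))" using e by (intro divide_pos_pos) (auto intro: add_nonneg_pos)
    then have s0: "0 < s" unfolding s_def by simp
    have s1: "s \<le> 1/2" unfolding s_def by (rule min.cobounded1)
    note s = s0 s1
    define y where "y = l + s *\<^sub>R (q - l)"
    have by_: "bc k y = (1 - s) * bc k l + s * bc k q" for k unfolding y_def by (rule bc_seg)
    have ycell: "y \<in> cell f" unfolding cell_def
    proof (intro CollectI allI impI)
      fix k :: nat assume k: "k < 4"
      have "(1 - s) * bc k l + s * bc k q \<ge> (1 - s) * of_int (f!k) + s * of_int (f!k)"
        using lcell[OF k] qcell[OF k] s by (intro add_mono mult_left_mono) auto
      moreover have "(1 - s) * bc k l + s * bc k q \<le> (1 - s) * (of_int (f!k) + 1) + s * (of_int (f!k) + 1)"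
        using lcell[OF k] qcell[OF k] s by (intro add_mono mult_left_mono) auto
      ultimately show "of_int (f!k) \<le> bc k y \<and> bc k y \<le> of_int (f!k) + 1"
        unfolding by_ by (simp add: algebra_simps)
    qed
    have "bc j y = c" unfolding by_ using lc bq[OF j] by (simp add: nu_def algebra_simps)
    then have "y \<notin> interior (cell f)" unfolding interior_cell using j cd d by auto
    then have yf: "y \<in> frontier (cell f)" using ycell closed_cell by (simp add: frontier_def)
    have yT: "y \<in> interior T0" unfolding interior_T0
    proof (intro CollectI allI impI)
      fix k :: nat assume k: "k < 4"
      have "0 \<le> (1 - s) * bc k l" using lcell[OF k] nn k s by (intro mult_nonneg_nonneg) auto
      moreover have "0 < s * bc k q" using s qpos[OF k] by simp
      ultimately show "0 < bc k y" unfolding by_ by linarith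
    qed
    have "dist y l = s * norm (q - l)" unfolding y_def dist_norm using s by simp
    also have "\<dots> \<le> (e / (2 * (norm (q - l) + 1))) * norm (q - l)"
      by (intro mult_right_mono) (auto simp: s_def)
    also have "\<dots> < e"
    proof -
      have "norm (q - l) / (2 * (norm (q - l) + 1)) < 1"
      proof -
        have "0 < 2 * (norm (q - l) + 1)" by (simp add: add_nonneg_pos)
        moreover have "norm (q - l) < 2 * (norm (q - l) + 1)" by (smt (verit) norm_ge_zero)
        ultimately show ?thesis by (simp add: divide_less_eq)
      qed
      then have "e * (norm (q - l) / (2 * (norm (q - l) + 1))) < e * 1"
        using e by (intro mult_strict_left_mono) auto
      then show ?thesis by (simp add: mult.commute)
    qed
    finally show "\<exists>y\<in>frontier (cell f) \<inter> interior T0. dist y l < e" using yf yT by blast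
  qed
qed


lemma chk_i: "i < 34 \<Longrightarrow> chk (srcs!i) (mvs!i)"
  using chk_all by (simp add: list_all_iff)
lemma valid_src_i: "i < 34 \<Longrightarrow> valid (srcs!i)"
  using valid_srcs len_srcs by (simp add: list_all_iff)
lemma tgts_i: "i < 34 \<Longrightarrow> tgts!i = tg (srcs!i) (mvs!i)"
  by (simp add: tgts_def)
lemma len_tgts: "length tgts = 34" by (simp add: tgts_def)
lemma valid_set_srcs: "f \<in> set srcs \<Longrightarrow> valid f"
  using valid_srcs by (simp add: list_all_iff)
lemma valid_tgt_i: "i < 34 \<Longrightarrow> valid (tgts!i)"
  using set_tgts len_tgts valid_set_srcs by (metis nth_mem)
lemma img_i: "i < 34 \<Longrightarrow> mot (mvs!i) ` cell (srcs!i) = cell (tgts!i)"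
  using image_cell[OF chk_i] tgts_i by simp

lemma in_srcs_idx: "f \<in> set srcs \<Longrightarrow> \<exists>i<34. srcs!i = f"
  using len_srcs by (metis in_set_conv_nth)
lemma in_tgts_idx: "f \<in> set srcs \<Longrightarrow> \<exists>i<34. tgts!i = f"
  using len_tgts set_tgts by (metis in_set_conv_nth)

lemma union_src: "(\<Union>i<34. cell (srcs!i)) = T0"
proof
  show "(\<Union>i<34. cell (srcs!i)) \<subseteq> T0"
    using valid_src_i cell_sub_T0 valid_nn by blast
  show "T0 \<subseteq> (\<Union>i<34. cell (srcs!i))"
  proof
    fix x assume "x \<in> T0"
    then obtain f where "valid f" "x \<in> cell f" using find_cell by blast
    then obtain i where "i < 34" "srcs!i = f" using valid_in_srcs in_srcs_idx by blast
    then show "x \<in> (\<Union>i<34. cell (srcs!i))" using \<open>x \<in> cell f\<close> by blast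
  qed
qed

lemma union_tgt: "(\<Union>i<34. mot (mvs!i) ` cell (srcs!i)) = T0"
proof -
  have "(\<Union>i<34. mot (mvs!i) ` cell (srcs!i)) = (\<Union>i<34. cell (tgts!i))"
    using img_i by simp
  also have "\<dots> = T0"
  proof
    show "(\<Union>i<34. cell (tgts!i)) \<subseteq> T0"
      using valid_tgt_i cell_sub_T0 valid_nn by blast
    show "T0 \<subseteq> (\<Union>i<34. cell (tgts!i))"
    proof
      fix x assume "x \<in> T0"
      then obtain f where "valid f" "x \<in> cell f" using find_cell by blast
      then obtain i where "i < 34" "tgts!i = f" using valid_in_srcs in_tgts_idx by blast
      then show "x \<in> (\<Union>i<34. cell (tgts!i))" using \<open>x \<in> cell f\<close> by blast
    qed
  qed
  finally show ?thesis .
qed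

lemma frontier_T0: "frontier T0 = {x \<in> T0. \<exists>m<4. bc m x = 0}"
proof -
  have "frontier T0 = T0 - interior T0" unfolding frontier_def using closed_T0 by simp
  also have "\<dots> = {x \<in> T0. \<exists>m<4. bc m x = 0}"
    unfolding interior_T0
  proof (intro set_eqI iffI)
    fix x assume x: "x \<in> T0 - {x. \<forall>m<4. 0 < bc m x}"
    then obtain m where m: "m < 4" "\<not> 0 < bc m x" by auto
    moreover have "0 \<le> bc m x" using x m unfolding T0_def by auto
    ultimately show "x \<in> {x \<in> T0. \<exists>m<4. bc m x = 0}" using x by auto
  qed auto
  finally show ?thesis .
qed

lemma tg_neg_nth: "m < 4 \<Longrightarrow> tg f (Neg t) ! m = t!m - f!(tau m) - 1"
  by (auto simp: tau_def less_Suc_eq numeral_eq_Suc)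
lemma tg_pos_nth: "m < 4 \<Longrightarrow> tg f (Pos t) ! m = f!m + t!m"
  by (auto simp: less_Suc_eq numeral_eq_Suc)
lemma ssum_tg_neg: "ssum (tg f (Neg t)) = ssum t - ssum f - 4"
  by (simp add: ssum_def)
lemma tau_lt: "m < 4 \<Longrightarrow> tau m < 4" by (simp add: tau_def)

lemma frontier_cover:
  "frontier T0 \<subseteq> (\<Union>i<34. mot (mvs!i) ` closure (frontier (cell (srcs!i)) \<inter> interior T0))"
proof
  fix y assume "y \<in> frontier T0"
  then obtain m where y: "y \<in> T0" "m < 4" "bc m y = 0" unfolding frontier_T0 by blast
  then obtain f where f: "valid f" "y \<in> cell f" "2 \<le> ssum f" using find_cell by blast
  then obtain i where i: "i < 34" "tgts!i = f" using valid_in_srcs in_tgts_idx by blast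
  define F where "F = srcs!i"
  define mv where "mv = mvs!i"
  have ch: "chk F mv" and vF: "valid F" using chk_i valid_src_i i F_def mv_def by auto
  have tf: "tg F mv = f" using tgts_i i F_def mv_def by simp
  have fm: "f!m = 0" using f y unfolding valid_def cell_def by force
  define l where "l = minv mv y"
  have yl: "y = mot mv l" unfolding l_def by (simp add: mot_minv)
  have lc: "l \<in> cell F" using mem_cell_mot[OF ch, of l] yl tf f(2) by simp
  have nnF: "\<forall>k<4. 0 \<le> F!k" using vF valid_nn by blast
  have sF: "1 \<le> ssum F" "ssum F \<le> 3" using vF by (auto simp: valid_def)
  have "l \<in> closure (frontier (cell F) \<inter> interior T0)"
  proof (cases mv)
    case (Pos t)
    have st: "ssum t = 0" using ch Pos by simp
    have "tg F mv ! m = 0" using tf fm by simp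
    then have F1: "1 \<le> F!m" using ch Pos y(2) by (auto simp: list_all_iff)
    have "F!m + t!m = 0" using \<open>tg F mv ! m = 0\<close> Pos tg_pos_nth[OF y(2)] by simp
    moreover have "bc m y = bc m l + of_int (t!m)" using yl Pos bc_pos[OF st y(2)] by simp
    ultimately have blm: "bc m l = of_int (F!m)" using y(3)
      by (metis add.right_neutral add_diff_cancel_right' diff_0 of_int_0 of_int_diff minus_diff_eq diff_add_cancel add_diff_cancel_left' eq_diff_eq add.commute)
    show ?thesis
      by (rule face_closure[OF nnF y(2) lc blm, of 0 "(4 - of_int (ssum F))/3"]) (use F1 sF in auto)
  next
    case (Neg t)
    have st: "ssum t = 8" using ch Neg by simp
    have "tg F mv ! m = 0" using tf fm by simp
    then have tm: "t!m - F!(tau m) - 1 = 0" using Neg tg_neg_nth[OF y(2), of F t] by simp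
    have "bc m y = of_int (t!m) - bc (tau m) l" using yl Neg bc_neg[OF st y(2)] by simp
    then have blm: "bc (tau m) l = of_int (F!(tau m)) + 1" using y(3) tm
      by (smt (verit) of_int_1 of_int_add of_int_diff of_int_0)
    have "ssum f = ssum t - ssum F - 4" using tf Neg ssum_tg_neg[of F t] by simp
    then have "ssum f = 4 - ssum F" using st by simp
    then have sF2: "ssum F \<le> 2" using f(3) by simp
    show ?thesis
      by (rule face_closure[OF nnF tau_lt[OF y(2)] lc blm, of 1 "(4 - of_int (ssum F) - 1)/3"])
        (use sF sF2 nnF tau_lt[OF y(2)] in \<open>auto simp: add_nonneg_pos\<close>)
  qed
  then have "y \<in> mot mv ` closure (frontier (cell F) \<inter> interior T0)" using yl by blast
  then show "y \<in> (\<Union>i<34. mot (mvs!i) ` closure (frontier (cell (srcs!i)) \<inter> interior T0))"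
    using i F_def mv_def by blast
qed

lemma T0_dissection: "inside_out_dissection T0 34 (\<lambda>i. cell (srcs!i)) (\<lambda>i. mot (mvs!i))"
  unfolding inside_out_dissection_def
proof (intro conjI allI impI)
  fix i assume "i < (34::nat)" then show "polyhedron (cell (srcs!i))" using poly_cell valid_src_i by blast
next
  fix i j assume ij: "i < (34::nat)" "j < 34" "i \<noteq> j"
  have "srcs!i \<noteq> srcs!j" using dist_srcs ij len_srcs by (simp add: nth_eq_iff_index_eq)
  then show "interior (cell (srcs!i)) \<inter> interior (cell (srcs!j)) = {}"
    using disj_cells valid_src_i ij by (simp add: valid_def)
next
  show "(\<Union>i<34. cell (srcs!i)) = T0" by (rule union_src)
next
  fix i show "rigid_motion (mot (mvs!i))" by (rule rigid_mot)
next
  fix i j assume ij: "i < (34::nat)" "j < 34" "i \<noteq> j"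
  have "tgts!i \<noteq> tgts!j" using dist_tgts ij len_tgts by (simp add: nth_eq_iff_index_eq)
  then show "interior (mot (mvs!i) ` cell (srcs!i)) \<inter> interior (mot (mvs!j) ` cell (srcs!j)) = {}"
    using disj_cells valid_tgt_i ij img_i by (simp add: valid_def)
next
  have "congruent T0 T0" unfolding congruent_def by (rule exI[of _ id]) simp
  then show "congruent T0 (\<Union>i<34. mot (mvs!i) ` cell (srcs!i))" by (simp add: union_tgt)
next
  show "frontier (\<Union>i<34. mot (mvs!i) ` cell (srcs!i))
       \<subseteq> (\<Union>i<34. mot (mvs!i) ` closure (frontier (cell (srcs!i)) \<inter> interior T0))"
    using frontier_cover by (simp add: union_tgt)
qed


locale bihom =
  fixes f g :: "real^3 \<Rightarrow> real^3"
  assumes cf: "continuous_on UNIV f" and cg: "continuous_on UNIV g"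
    and gf: "\<And>x. g (f x) = x" and fg: "\<And>y. f (g y) = y"
begin

lemma img_vimage: "f ` U = g -` U"
proof
  show "f ` U \<subseteq> g -` U" using gf by auto
  show "g -` U \<subseteq> f ` U"
  proof
    fix y assume "y \<in> g -` U" then have "g y \<in> U" by simp
    then show "y \<in> f ` U" by (rule image_eqI[rotated]) (simp add: fg)
  qed
qed

lemma img_vimage2: "g ` U = f -` U"
proof
  show "g ` U \<subseteq> f -` U" using fg by auto
  show "f -` U \<subseteq> g ` U"
  proof
    fix y assume "y \<in> f -` U" then have "f y \<in> U" by simp
    then show "y \<in> g ` U" by (rule image_eqI[rotated]) (simp add: gf)
  qed
qed

lemma inj_f: "inj f" by (metis gf injI)

lemma int_img: "interior (f ` S) = f ` interior S"
proof
  have "open (f ` interior S)" unfolding img_vimage by (intro open_vimage cg) simp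
  moreover have "f ` interior S \<subseteq> f ` S" using interior_subset by blast
  ultimately show "f ` interior S \<subseteq> interior (f ` S)" by (meson interior_maximal)
  have "open (g ` interior (f ` S))" unfolding img_vimage2 by (intro open_vimage cf) simp
  moreover have "g ` interior (f ` S) \<subseteq> S" using interior_subset gf by fastforce
  ultimately have "g ` interior (f ` S) \<subseteq> interior S" by (meson interior_maximal)
  then have "f ` g ` interior (f ` S) \<subseteq> f ` interior S" by blast
  moreover have "f ` g ` X = X" for X using fg by (simp add: image_comp comp_def)
  ultimately show "interior (f ` S) \<subseteq> f ` interior S" by simp
qed

lemma cl_img: "closure (f ` S) = f ` closure S"
proof
  have c1: "closed (f ` closure S)" unfolding img_vimage by (rule closed_vimage[OF closed_closure cg])
  have s1: "f ` S \<subseteq> f ` closure S" by (rule image_mono[OF closure_subset])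
  show "closure (f ` S) \<subseteq> f ` closure S" by (rule closure_minimal[OF s1 c1])
  have c2: "closed (g ` closure (f ` S))" unfolding img_vimage2 by (rule closed_vimage[OF closed_closure cf])
  have s2: "S \<subseteq> g ` closure (f ` S)"
  proof
    fix x assume "x \<in> S" then have "f x \<in> f ` S" by (rule imageI)
    then have "f x \<in> closure (f ` S)" using closure_subset[of "f ` S"] by (rule subsetD[rotated])
    then have "g (f x) \<in> g ` closure (f ` S)" by (rule imageI)
    then show "x \<in> g ` closure (f ` S)" by (simp only: gf)
  qed
  have "closure S \<subseteq> g ` closure (f ` S)" by (rule closure_minimal[OF s2 c2])
  then have "f ` closure S \<subseteq> f ` g ` closure (f ` S)" by (rule image_mono)
  moreover have "f ` g ` X = X" for X using fg by (simp add: image_comp comp_def)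
  ultimately show "f ` closure S \<subseteq> closure (f ` S)" by simp
qed

lemma fr_img: "frontier (f ` S) = f ` frontier S"
  unfolding frontier_def int_img cl_img using image_set_diff[OF inj_f] by simp

end

definition aff :: "real^3 \<Rightarrow> real \<Rightarrow> real^3^3 \<Rightarrow> real^3 \<Rightarrow> real^3" where
  "aff a k Q x = a + k *\<^sub>R (Q *v x)"
definition affi :: "real^3 \<Rightarrow> real \<Rightarrow> real^3^3 \<Rightarrow> real^3 \<Rightarrow> real^3" where
  "affi a k Q y = (1/k) *\<^sub>R (transpose Q *v (y - a))"

lemma orth_QtQ: "orthogonal_matrix Q \<Longrightarrow> transpose Q ** Q = mat 1"
  by (simp add: orthogonal_matrix_def)
lemma orth_QQt: "orthogonal_matrix Q \<Longrightarrow> Q ** transpose Q = mat 1"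
  by (simp add: orthogonal_matrix_def)

lemma bihom_aff: assumes "orthogonal_matrix Q" "k > 0"
  shows "bihom (aff a k Q) (affi a k Q)"
proof
  have c: "continuous_on UNIV (\<lambda>x. M *v x)" for M :: "real^3^3"
    by (rule linear_continuous_on) (simp add: linear_conv_bounded_linear[symmetric])
  have e1: "aff a k Q = (\<lambda>x. a + k *\<^sub>R (Q *v x))" by (simp add: aff_def fun_eq_iff)
  have e2: "affi a k Q = (\<lambda>x. (1/k) *\<^sub>R (transpose Q *v x) - (1/k) *\<^sub>R (transpose Q *v a))"
    by (simp add: affi_def fun_eq_iff matrix_vector_mult_diff_distrib algebra_simps)
  show "continuous_on UNIV (aff a k Q)" unfolding e1
    by (rule continuous_on_add[OF continuous_on_const continuous_on_scaleR[OF continuous_on_const c]])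
  show "continuous_on UNIV (affi a k Q)" unfolding e2
    by (rule continuous_on_diff[OF continuous_on_scaleR[OF continuous_on_const c] continuous_on_const])
  have t1: "transpose Q *v (Q *v x) = x" for x
    using matrix_vector_mul_assoc[of "transpose Q" Q x] orth_QtQ[OF assms(1)] by simp
  have t2: "Q *v (transpose Q *v x) = x" for x
    using matrix_vector_mul_assoc[of Q "transpose Q" x] orth_QQt[OF assms(1)] by simp
  fix x
  show "affi a k Q (aff a k Q x) = x" unfolding aff_def affi_def using assms(2)
    by (simp only: add_diff_cancel_left' matrix_vector_mult_scaleR t1 scaleR_scaleR) simp
  show "aff a k Q (affi a k Q x) = x" unfolding aff_def affi_def using assms(2)
    by (simp only: matrix_vector_mult_scaleR t2 scaleR_scaleR) simp
qed

lemma aff_hull: "aff a k Q ` (convex hull S) = convex hull (aff a k Q ` S)"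
proof -
  have l: "linear (\<lambda>x. k *\<^sub>R (Q *v x))" by (simp add: linear_iff matrix_vector_right_distrib matrix_vector_mult_scaleR algebra_simps)
  have "aff a k Q ` X = (\<lambda>x. a + x) ` ((\<lambda>x. k *\<^sub>R (Q *v x)) ` X)" for X
    by (simp add: image_image aff_def)
  then show ?thesis
    by (simp only: convex_hull_linear_image[OF l] convex_hull_translation)
qed


lemma img_comp_id: "(\<And>x. g (f x) = x) \<Longrightarrow> (h \<circ> g) ` f ` S = h ` S"
  by (simp add: image_comp comp_def)

lemma transfer:
  assumes D: "inside_out_dissection P n Ps gs" and U: "(\<Union>i<n. gs i ` Ps i) = P"
    and Q: "orthogonal_matrix Q" and k: "k > 0"
  shows "inside_out_dissection (aff a k Q ` P) n (\<lambda>i. aff a k Q ` Ps i) (\<lambda>i. aff a k Q \<circ> gs i \<circ> affi a k Q)"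
proof -
  define ph where "ph = aff a k Q"
  define ps where "ps = affi a k Q"
  interpret bihom ph ps unfolding ph_def ps_def by (rule bihom_aff[OF Q k])
  have injph: "inj ph" by (rule inj_f)
  have poly: "polyhedron (ph ` C)" if pC: "polyhedron C" for C
  proof -
    obtain F where F: "finite F" "\<forall>S\<in>F. finite S" "C = (\<Union>S\<in>F. convex hull S)"
      using pC unfolding polyhedron_def by blast
    have i: "interior C \<noteq> {}" "closure (interior C) = C" "connected C"
      using pC unfolding polyhedron_def by auto
    show ?thesis unfolding polyhedron_def
    proof (intro conjI)
      show "\<exists>F. finite F \<and> (\<forall>S\<in>F. finite S) \<and> ph ` C = (\<Union>S\<in>F. convex hull S)"
      proof (intro exI conjI)
        show "finite ((\<lambda>S. ph ` S) ` F)" using F by simp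
        show "\<forall>S\<in>(\<lambda>S. ph ` S) ` F. finite S" using F by auto
        show "ph ` C = (\<Union>S\<in>(\<lambda>S. ph ` S) ` F. convex hull S)"
          unfolding F(3) image_UN ph_def aff_hull by simp
      qed
      show "connected (ph ` C)"
        by (rule connected_continuous_image[OF continuous_on_subset[OF cf subset_UNIV] i(3)])
      show "interior (ph ` C) \<noteq> {}" using i(1) unfolding int_img by simp
      show "closure (interior (ph ` C)) = ph ` C" unfolding int_img cl_img i(2) ..
    qed
  qed
  have rig: "rigid_motion (ph \<circ> g \<circ> ps)" if rg: "rigid_motion g" for g
  proof -
    obtain A b where A: "orthogonal_matrix A" "det A = 1" "\<And>x. g x = A *v x + b"
      using rg unfolding rigid_motion_def by blast
    define M where "M = Q ** A ** transpose Q"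
    have oM: "orthogonal_matrix M" unfolding M_def
      by (intro orthogonal_matrix_mul Q A(1)) (simp add: Q)
    have "det Q = 1 \<or> det Q = -1" by (rule det_orthogonal_matrix[OF Q])
    then have dM: "det M = 1" unfolding M_def by (auto simp: det_mul A(2))
    have eq: "(ph \<circ> g \<circ> ps) y = M *v y + (a - M *v a + k *\<^sub>R (Q *v b))" for y
    proof -
      have "(ph \<circ> g \<circ> ps) y = a + k *\<^sub>R (Q *v (A *v ((1/k) *\<^sub>R (transpose Q *v (y - a))) + b))"
        by (simp add: ph_def ps_def aff_def affi_def A(3))
      also have "\<dots> = a + k *\<^sub>R ((1/k) *\<^sub>R (M *v (y - a)) + Q *v b)"
        unfolding M_def matrix_vector_right_distrib matrix_vector_mult_scaleR matrix_vector_mul_assoc matrix_mul_assoc ..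
      also have "\<dots> = M *v y + (a - M *v a + k *\<^sub>R (Q *v b))"
        using k by (simp add: scaleR_add_right matrix_vector_mult_diff_distrib algebra_simps)
      finally show ?thesis .
    qed
    show ?thesis unfolding rigid_motion_def using oM dM eq by blast
  qed
  have D1: "\<forall>i<n. polyhedron (Ps i)" and D2: "\<forall>i<n. \<forall>j<n. i \<noteq> j \<longrightarrow> interior (Ps i) \<inter> interior (Ps j) = {}"
    and D3: "(\<Union>i<n. Ps i) = P" and D4: "\<forall>i<n. rigid_motion (gs i)"
    and D5: "\<forall>i<n. \<forall>j<n. i \<noteq> j \<longrightarrow> interior (gs i ` Ps i) \<inter> interior (gs j ` Ps j) = {}"
    and D7: "frontier (\<Union>i<n. gs i ` Ps i) \<subseteq> (\<Union>i<n. gs i ` closure (frontier (Ps i) \<inter> interior P))"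
    using D unfolding inside_out_dissection_def by auto
  have gi: "(ph \<circ> gs i \<circ> ps) ` ph ` X = ph ` gs i ` X" for i X
    by (simp add: image_comp comp_def gf)
  have U2: "(\<Union>i<n. (ph \<circ> gs i \<circ> ps) ` ph ` Ps i) = ph ` P"
    unfolding gi image_UN[symmetric] U ..
  have "inside_out_dissection (ph ` P) n (\<lambda>i. ph ` Ps i) (\<lambda>i. ph \<circ> gs i \<circ> ps)"
    unfolding inside_out_dissection_def
  proof (intro conjI allI impI)
    fix i assume "i < n" then show "polyhedron (ph ` Ps i)" using D1 poly by blast
  next
    fix i j assume "i < n" "j < n" "i \<noteq> j"
    then show "interior (ph ` Ps i) \<inter> interior (ph ` Ps j) = {}"
      using D2 unfolding int_img image_Int[OF injph, symmetric] by simp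
  next
    show "(\<Union>i<n. ph ` Ps i) = ph ` P" unfolding image_UN[symmetric] D3 ..
  next
    fix i assume "i < n" then show "rigid_motion (ph \<circ> gs i \<circ> ps)" using D4 rig by blast
  next
    fix i j assume "i < n" "j < n" "i \<noteq> j"
    then show "interior ((ph \<circ> gs i \<circ> ps) ` ph ` Ps i) \<inter> interior ((ph \<circ> gs j \<circ> ps) ` ph ` Ps j) = {}"
      using D5 unfolding gi int_img image_Int[OF injph, symmetric] by simp
  next
    show "congruent (ph ` P) (\<Union>i<n. (ph \<circ> gs i \<circ> ps) ` ph ` Ps i)"
      unfolding U2 congruent_def by (rule exI[of _ id]) simp
  next
    have "frontier (\<Union>i<n. (ph \<circ> gs i \<circ> ps) ` ph ` Ps i) = ph ` frontier (\<Union>i<n. gs i ` Ps i)"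
      unfolding U2 U fr_img ..
    also have "\<dots> \<subseteq> ph ` (\<Union>i<n. gs i ` closure (frontier (Ps i) \<inter> interior P))"
      using D7 by (rule image_mono)
    also have "\<dots> = (\<Union>i<n. (ph \<circ> gs i \<circ> ps) ` closure (frontier (ph ` Ps i) \<inter> interior (ph ` P)))"
      unfolding fr_img int_img image_Int[OF injph, symmetric] cl_img gi image_UN ..
    finally show "frontier (\<Union>i<n. (ph \<circ> gs i \<circ> ps) ` ph ` Ps i)
       \<subseteq> (\<Union>i<n. (ph \<circ> gs i \<circ> ps) ` closure (frontier (ph ` Ps i) \<inter> interior (ph ` P)))" .
  qed
  then show ?thesis unfolding ph_def ps_def .
qed


definition p1 :: "real^3" where "p1 = vector [4,4,0]"
definition p2 :: "real^3" where "p2 = vector [4,0,4]"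
definition p3 :: "real^3" where "p3 = vector [0,4,4]"

lemma T0_hull: "T0 = convex hull {0, p1, p2, p3}"
proof
  have "{0, p1, p2, p3} \<subseteq> T0"
    by (auto simp: T0_def four_cases bc_def p1_def p2_def p3_def vector_3)
  then show "convex hull {0, p1, p2, p3} \<subseteq> T0"
    by (rule hull_minimal) (rule convex_T0)
  show "T0 \<subseteq> convex hull {0, p1, p2, p3}"
  proof
    fix x assume x: "x \<in> T0"
    have nn: "0 \<le> bc 0 x" "0 \<le> bc 1 x" "0 \<le> bc 2 x" "0 \<le> bc 3 x" using x by (auto simp: T0_def four_cases)
    have d: "0 \<noteq> p1" "0 \<noteq> p2" "0 \<noteq> p3" "p1 \<noteq> p2" "p1 \<noteq> p3" "p2 \<noteq> p3"
      by (auto simp: p1_def p2_def p3_def vec_eq_iff forall_3 vector_3 dest: spec[of _ 1] spec[of _ 2] spec[of _ 3])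
    define u where "u y = (if y = 0 then bc 0 x / 4 else if y = p1 then bc 1 x / 4 else if y = p2 then bc 2 x / 4 else bc 3 x / 4)" for y
    have u: "u 0 = bc 0 x / 4" "u p1 = bc 1 x / 4" "u p2 = bc 2 x / 4" "u p3 = bc 3 x / 4"
      using d by (auto simp: u_def)
    have s1: "sum u {0, p1, p2, p3} = 1" using d u bc_sum[of x] by simp
    have s2: "(\<Sum>y\<in>{0, p1, p2, p3}. u y *\<^sub>R y) = x" using d u
      by (simp add: vec_eq_iff forall_3 p1_def p2_def p3_def vector_3 bc_def)
    show "x \<in> convex hull {0, p1, p2, p3}" unfolding convex_hull_finite[OF finite.insertI[OF finite.insertI[OF finite.insertI[OF finite.insertI[OF finite.emptyI]]]]]
      using nn u s1 s2 d by (intro CollectI exI[of _ u]) auto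
  qed
qed

definition w1 :: "real^3" where "w1 = vector [1/8,1/8,-1/8]"
definition w2 :: "real^3" where "w2 = vector [1/8,-1/8,1/8]"
definition w3 :: "real^3" where "w3 = vector [-1/8,1/8,1/8]"

lemma regular_image:
  fixes a b c d :: "real^3"
  assumes s: "s > 0" "dist a b = s" "dist a c = s" "dist a d = s" "dist b c = s" "dist b d = s" "dist c d = s"
  shows "\<exists>k Q. k > 0 \<and> orthogonal_matrix Q \<and> aff a k Q ` T0 = convex hull {a, b, c, d}"
proof -
  define u1 where "u1 = b - a"
  define u2 where "u2 = c - a"
  define u3 where "u3 = d - a"
  have sq: "norm v = s \<Longrightarrow> v \<bullet> v = s^2" for v :: "real^3" by (metis power2_norm_eq_inner)
  have g11: "u1 \<bullet> u1 = s^2" using s(2) unfolding u1_def by (intro sq) (simp add: dist_norm norm_minus_commute)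
  have g22: "u2 \<bullet> u2 = s^2" using s(3) unfolding u2_def by (intro sq) (simp add: dist_norm norm_minus_commute)
  have g33: "u3 \<bullet> u3 = s^2" using s(4) unfolding u3_def by (intro sq) (simp add: dist_norm norm_minus_commute)
  have h12: "(u1 - u2) \<bullet> (u1 - u2) = s^2" using s(5) unfolding u1_def u2_def by (intro sq) (simp add: dist_norm)
  have h13: "(u1 - u3) \<bullet> (u1 - u3) = s^2" using s(6) unfolding u1_def u3_def by (intro sq) (simp add: dist_norm)
  have h23: "(u2 - u3) \<bullet> (u2 - u3) = s^2" using s(7) unfolding u2_def u3_def by (intro sq) (simp add: dist_norm)
  have g12: "u1 \<bullet> u2 = s^2/2" using h12 g11 g22 by (simp add: inner_diff_left inner_diff_right inner_commute)
  have g13: "u1 \<bullet> u3 = s^2/2" using h13 g11 g33 by (simp add: inner_diff_left inner_diff_right inner_commute)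
  have g23: "u2 \<bullet> u3 = s^2/2" using h23 g22 g33 by (simp add: inner_diff_left inner_diff_right inner_commute)
  define Fl where "Fl x = (w1 \<bullet> x) *\<^sub>R u1 + (w2 \<bullet> x) *\<^sub>R u2 + (w3 \<bullet> x) *\<^sub>R u3" for x
  have linF: "linear Fl" unfolding Fl_def
    by (simp add: linear_iff inner_add_right inner_scaleR_right algebra_simps scaleR_add_left)
  have nF: "(norm (Fl x))^2 = s^2/32 * (norm x)^2" for x
  proof -
    define c1 where "c1 = w1 \<bullet> x"
    define c2 where "c2 = w2 \<bullet> x"
    define c3 where "c3 = w3 \<bullet> x"
    have "(norm (Fl x))^2 = Fl x \<bullet> Fl x" by (simp add: power2_norm_eq_inner)
    also have "\<dots> = s^2 * (c1^2 + c2^2 + c3^2 + c1*c2 + c1*c3 + c2*c3)"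
      unfolding Fl_def c1_def[symmetric] c2_def[symmetric] c3_def[symmetric]
      by (simp add: inner_add_left inner_add_right g11 g22 g33 g12 g13 g23 inner_commute[of u2 u1] inner_commute[of u3 u1] inner_commute[of u3 u2] power2_eq_square algebra_simps)
    also have "\<dots> = s^2/32 * (norm x)^2"
      unfolding power2_norm_eq_inner c1_def c2_def c3_def w1_def w2_def w3_def
      by (simp add: inner_vec_def sum_3 vector_3 power2_eq_square) (simp add: field_simps)
    finally show ?thesis .
  qed
  define k where "k = s / sqrt 32"
  have k: "k > 0" using s(1) by (simp add: k_def)
  have k2: "k^2 = s^2/32" by (simp add: k_def power_divide)
  have nF2: "norm (Fl x) = k * norm x" for x
  proof -
    have "(norm (Fl x))^2 = (k * norm x)^2" unfolding power_mult_distrib k2 by (rule nF)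
    then show ?thesis using k by (simp add: power2_eq_iff_nonneg)
  qed
  define Qf where "Qf x = (1/k) *\<^sub>R Fl x" for x
  have linQ: "linear Qf" unfolding Qf_def[abs_def] using linF
    by (simp add: linear_iff scaleR_add_right)
  have "orthogonal_transformation Qf" unfolding orthogonal_transformation
    using linQ nF2 k by (simp add: Qf_def)
  then have oQ: "orthogonal_matrix (matrix Qf)" using orthogonal_transformation_matrix by blast
  have ax: "aff a k (matrix Qf) x = a + Fl x" for x
  proof -
    have "matrix Qf *v x = Qf x" using matrix_vector_mul(2)[OF linQ] by metis
    then show ?thesis using k by (simp add: aff_def Qf_def)
  qed
  have "Fl p1 = u1" "Fl p2 = u2" "Fl p3 = u3" "Fl 0 = 0"
    by (simp_all add: Fl_def w1_def w2_def w3_def p1_def p2_def p3_def inner_vec_def sum_3 vector_3)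
  then have "aff a k (matrix Qf) ` {0, p1, p2, p3} = {a, b, c, d}"
    by (simp add: ax u1_def u2_def u3_def)
  then have "aff a k (matrix Qf) ` T0 = convex hull {a, b, c, d}"
    unfolding T0_hull aff_hull by simp
  then show ?thesis using k oQ by blast
qed

theorem lemma3:
  fixes T :: "(real^3) set"
  assumes "regular_tetrahedron T"
  shows "inside_out_dissectable T 34"
proof -
  obtain a b c d s where s: "s > 0" "dist a b = s" "dist a c = s" "dist a d = s"
     "dist b c = s" "dist b d = s" "dist c d = s" and T: "T = convex hull {a, b, c, d}"
    using assms unfolding regular_tetrahedron_def by blast
  obtain k Q where kQ: "k > 0" "orthogonal_matrix Q" "aff a k Q ` T0 = T"
    using regular_image[OF s] T by blast
  have "inside_out_dissection (aff a k Q ` T0) 34 (\<lambda>i. aff a k Q ` cell (srcs!i)) (\<lambda>i. aff a k Q \<circ> mot (mvs!i) \<circ> affi a k Q)"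
    by (rule transfer[OF T0_dissection union_tgt kQ(2) kQ(1)])
  then show ?thesis unfolding inside_out_dissectable_def kQ(3) by blast
qed

end
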